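(* Let $G \sim G_{n,1/2}$ and let $g(n)$ be a sequence of integers such that \[ \mathbf{P}\big(\chi(G) - \zeta(G) \le g(n)\big) > 0.999 \quad \text{for all } n. \] Then there is a sequence of intervals $[s_n, t_n]$ with $t_n - s_n = g(n)$ such that \[ \mathbf{P}\big(\chi(G_{n,1/2}) \in [s_n, t_n]\big) > 0.9 \quad \text{for all } n. \]
   Context: $G_{n,1/2}$ denotes the Erdős–Rényi random graph on $n$ vertices in which each of the $\binom{n}{2}$ possible edges is present independently with probability $1/2$. $\chi(G)$ is the chromatic number of $G$. The cochromatic number $\zeta(G)$ is the minimum number of colours in a vertex colouring of $G$ in which every colour class is either an independent set or a clique. *)

theory Defs
  imports "HOL-Probability.Probability"
begin

text \<open>Simple graphs on the vertex set {0..<n} are represented by their edge sets,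
  i.e. sets of 2-element subsets of {..<n}.\<close>

definition all_edges :: "nat \<Rightarrow> nat set set" where
  "all_edges n = {e. e \<subseteq> {..<n} \<and> card e = 2}"

text \<open>G(n,1/2): each of the n choose 2 edges present independently with probability 1/2,
  which is exactly the uniform distribution on all edge sets.\<close>

definition Gnp_half :: "nat \<Rightarrow> nat set set pmf" where
  "Gnp_half n = pmf_of_set (Pow (all_edges n))"

definition is_clique :: "nat set set \<Rightarrow> nat set \<Rightarrow> bool" where
  "is_clique E S \<longleftrightarrow> (\<forall>u\<in>S. \<forall>v\<in>S. u \<noteq> v \<longrightarrow> {u, v} \<in> E)"

definition is_indep :: "nat set set \<Rightarrow> nat set \<Rightarrow> bool" where
  "is_indep E S \<longleftrightarrow> (\<forall>u\<in>S. \<forall>v\<in>S. {u, v} \<notin> E)"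

definition proper_colouring :: "nat \<Rightarrow> nat set set \<Rightarrow> nat \<Rightarrow> (nat \<Rightarrow> nat) \<Rightarrow> bool" where
  "proper_colouring n E k f \<longleftrightarrow> f ` {..<n} \<subseteq> {..<k} \<and>
     (\<forall>c<k. is_indep E {v. v < n \<and> f v = c})"

definition cochromatic_colouring :: "nat \<Rightarrow> nat set set \<Rightarrow> nat \<Rightarrow> (nat \<Rightarrow> nat) \<Rightarrow> bool" where
  "cochromatic_colouring n E k f \<longleftrightarrow> f ` {..<n} \<subseteq> {..<k} \<and>
     (\<forall>c<k. is_indep E {v. v < n \<and> f v = c} \<or> is_clique E {v. v < n \<and> f v = c})"

definition chromatic_number :: "nat \<Rightarrow> nat set set \<Rightarrow> nat" where
  "chromatic_number n E = (LEAST k. \<exists>f. proper_colouring n E k f)"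

definition cochromatic_number :: "nat \<Rightarrow> nat set set \<Rightarrow> nat" where
  "cochromatic_number n E = (LEAST k. \<exists>f. cochromatic_colouring n E k f)"

end

theory Submission imports Defs begin

definition upset :: "'a set \<Rightarrow> 'a set set \<Rightarrow> bool" where
  "upset A U \<longleftrightarrow> U \<subseteq> Pow A \<and> (\<forall>x y. x \<in> U \<longrightarrow> x \<subseteq> y \<longrightarrow> y \<subseteq> A \<longrightarrow> y \<in> U)"

lemma split_card:
  assumes "finite B" "a \<notin> B" "U \<subseteq> Pow (insert a B)"
  shows "card U = card {x\<in>Pow B. x \<in> U} + card {x\<in>Pow B. insert a x \<in> U}"
proof -
  have fin: "finite (Pow (insert a B))" using assms by simp
  have eq: "U = {x\<in>Pow B. x \<in> U} \<union> insert a ` {x\<in>Pow B. insert a x \<in> U}"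
  proof (intro equalityI subsetI)
    fix x assume x: "x \<in> U"
    show "x \<in> {x\<in>Pow B. x \<in> U} \<union> insert a ` {x\<in>Pow B. insert a x \<in> U}"
    proof (cases "a \<in> x")
      case True
      then have "x = insert a (x - {a})" by auto
      moreover have "x - {a} \<in> Pow B" using x assms by auto
      ultimately show ?thesis using x by (metis (mono_tags, lifting) Un_iff image_eqI mem_Collect_eq)
    next
      case False then show ?thesis using x assms by auto
    qed
  qed auto
  have inj: "inj_on (insert a) (Pow B)" using assms(2) unfolding inj_on_def
    by (metis PowD insert_ident subset_iff)
  have "card U = card {x\<in>Pow B. x \<in> U} + card (insert a ` {x\<in>Pow B. insert a x \<in> U})"
    apply (subst eq, rule card_Un_disjoint)
    using assms by auto
  also have "card (insert a ` {x\<in>Pow B. insert a x \<in> U}) = card {x\<in>Pow B. insert a x \<in> U}"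
    by (rule card_image, rule inj_on_subset[OF inj]) auto
  finally show ?thesis .
qed

lemma harris:
  assumes "finite A"
  shows "upset A U \<Longrightarrow> upset A V \<Longrightarrow> card U * card V \<le> card (U \<inter> V) * 2 ^ card A"
  using assms
proof (induction A arbitrary: U V rule: finite_induct)
  case empty
  have "U \<subseteq> {{}}" "V \<subseteq> {{}}" using empty unfolding upset_def by auto
  then have "U = {} \<or> U = {{}}" "V = {} \<or> V = {{}}" by (auto simp: subset_singleton_iff)
  then show ?case by auto
next
  case (insert a B)
  define U0 where "U0 = {x\<in>Pow B. x \<in> U}"
  define U1 where "U1 = {x\<in>Pow B. insert a x \<in> U}"
  define V0 where "V0 = {x\<in>Pow B. x \<in> V}"
  define V1 where "V1 = {x\<in>Pow B. insert a x \<in> V}"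
  have uU: "U \<subseteq> Pow (insert a B)" and uV: "V \<subseteq> Pow (insert a B)"
    using insert.prems unfolding upset_def by auto
  have cU: "card U = card U0 + card U1" unfolding U0_def U1_def
    by (rule split_card[OF insert(1,2) uU])
  have cV: "card V = card V0 + card V1" unfolding V0_def V1_def
    by (rule split_card[OF insert(1,2) uV])
  have cUV: "card (U \<inter> V) = card (U0 \<inter> V0) + card (U1 \<inter> V1)"
  proof -
    have "card (U \<inter> V) = card {x\<in>Pow B. x \<in> U \<inter> V} + card {x\<in>Pow B. insert a x \<in> U \<inter> V}"
      by (rule split_card[OF insert(1,2)]) (use uU in blast)
    moreover have "{x\<in>Pow B. x \<in> U \<inter> V} = U0 \<inter> V0" unfolding U0_def V0_def by blast
    moreover have "{x\<in>Pow B. insert a x \<in> U \<inter> V} = U1 \<inter> V1" unfolding U1_def V1_def by blast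
    ultimately show ?thesis by simp
  qed
  have upUr: "\<And>x y. x \<in> U \<Longrightarrow> x \<subseteq> y \<Longrightarrow> y \<subseteq> insert a B \<Longrightarrow> y \<in> U"
    using insert.prems(1) unfolding upset_def by blast
  have upU0: "upset B U0" unfolding upset_def U0_def
  proof (intro conjI allI impI)
    fix x y assume xy: "x \<in> {x\<in>Pow B. x \<in> U}" "x \<subseteq> y" "y \<subseteq> B"
    have "y \<subseteq> insert a B" using xy(3) by blast
    then have "y \<in> U" using upUr xy by blast
    then show "y \<in> {x\<in>Pow B. x \<in> U}" using xy(3) by blast
  qed blast
  have upU1: "upset B U1" unfolding upset_def U1_def
  proof (intro conjI allI impI)
    fix x y assume xy: "x \<in> {x\<in>Pow B. insert a x \<in> U}" "x \<subseteq> y" "y \<subseteq> B"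
    have "insert a y \<subseteq> insert a B" "insert a x \<subseteq> insert a y" using xy(2,3) by blast+
    then have "insert a y \<in> U" using upUr xy(1) by blast
    then show "y \<in> {x\<in>Pow B. insert a x \<in> U}" using xy(3) by blast
  qed blast
  have upVr: "\<And>x y. x \<in> V \<Longrightarrow> x \<subseteq> y \<Longrightarrow> y \<subseteq> insert a B \<Longrightarrow> y \<in> V"
    using insert.prems(2) unfolding upset_def by blast
  have upV0: "upset B V0" unfolding upset_def V0_def
  proof (intro conjI allI impI)
    fix x y assume xy: "x \<in> {x\<in>Pow B. x \<in> V}" "x \<subseteq> y" "y \<subseteq> B"
    have "y \<subseteq> insert a B" using xy(3) by blast
    then have "y \<in> V" using upVr xy by blast
    then show "y \<in> {x\<in>Pow B. x \<in> V}" using xy(3) by blast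
  qed blast
  have upV1: "upset B V1" unfolding upset_def V1_def
  proof (intro conjI allI impI)
    fix x y assume xy: "x \<in> {x\<in>Pow B. insert a x \<in> V}" "x \<subseteq> y" "y \<subseteq> B"
    have "insert a y \<subseteq> insert a B" "insert a x \<subseteq> insert a y" using xy(2,3) by blast+
    then have "insert a y \<in> V" using upVr xy(1) by blast
    then show "y \<in> {x\<in>Pow B. insert a x \<in> V}" using xy(3) by blast
  qed blast
  have fin: "finite (Pow B)" using insert by simp
  have s0: "U0 \<subseteq> U1" unfolding U0_def U1_def using upUr by blast
  have t0: "V0 \<subseteq> V1" unfolding V0_def V1_def using upVr by blast
  have le_u: "card U0 \<le> card U1" by (rule card_mono) (use fin s0 U1_def in auto)
  have le_v: "card V0 \<le> card V1" by (rule card_mono) (use fin t0 V1_def in auto)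
  have ih0: "card U0 * card V0 \<le> card (U0 \<inter> V0) * 2 ^ card B"
    using insert.IH[OF upU0 upV0] .
  have ih1: "card U1 * card V1 \<le> card (U1 \<inter> V1) * 2 ^ card B"
    using insert.IH[OF upU1 upV1] .
  define u0 where "u0 = card U0"
  define u1 where "u1 = card U1"
  define v0 where "v0 = card V0"
  define v1 where "v1 = card V1"
  have key: "(u0 + u1) * (v0 + v1) \<le> 2 * (u0 * v0 + u1 * v1)"
  proof -
    have "u0 \<le> u1" "v0 \<le> v1" using le_u le_v u0_def u1_def v0_def v1_def by auto
    then obtain d e where "u1 = u0 + d" "v1 = v0 + e" using le_Suc_ex by blast
    then show ?thesis by (simp add: algebra_simps)
  qed
  have "card U * card V = (u0 + u1) * (v0 + v1)" using cU cV u0_def u1_def v0_def v1_def by simp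
  also have "\<dots> \<le> 2 * (u0 * v0 + u1 * v1)" by (rule key)
  also have "\<dots> \<le> 2 * (card (U0 \<inter> V0) * 2 ^ card B + card (U1 \<inter> V1) * 2 ^ card B)"
    using ih0 ih1 u0_def u1_def v0_def v1_def by simp
  also have "\<dots> = card (U \<inter> V) * 2 ^ card (insert a B)"
    using cUV insert(1,2) by (simp add: algebra_simps)
  finally show ?case .
qed


lemma fin_edges: "finite (all_edges n)"
proof -
  have "all_edges n \<subseteq> Pow {..<n}" unfolding all_edges_def by auto
  then show ?thesis by (rule finite_subset) simp
qed

lemma chi_ex: "E \<subseteq> all_edges n \<Longrightarrow> proper_colouring n E n id"
  unfolding proper_colouring_def is_indep_def all_edges_def by auto

lemma chi_le: "E \<subseteq> all_edges n \<Longrightarrow> chromatic_number n E \<le> n"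
  unfolding chromatic_number_def by (rule Least_le) (use chi_ex in blast)

lemma chi_wit: "E \<subseteq> all_edges n \<Longrightarrow> \<exists>f. proper_colouring n E (chromatic_number n E) f"
  unfolding chromatic_number_def by (rule LeastI_ex) (use chi_ex in blast)

lemma chi_mono:
  assumes "E \<subseteq> E'" "E' \<subseteq> all_edges n"
  shows "chromatic_number n E \<le> chromatic_number n E'"
proof -
  obtain f where f: "proper_colouring n E' (chromatic_number n E') f" using chi_wit[OF assms(2)] by blast
  then have "proper_colouring n E (chromatic_number n E') f"
    using assms(1) unfolding proper_colouring_def is_indep_def by blast
  then show ?thesis unfolding chromatic_number_def by (intro Least_le) blast
qed

lemma zeta_le:
  assumes "E \<subseteq> all_edges n"
  shows "cochromatic_number n E \<le> chromatic_number n (all_edges n - E)"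
proof -
  obtain f where f: "proper_colouring n (all_edges n - E) (chromatic_number n (all_edges n - E)) f"
    using chi_wit[of "all_edges n - E" n] by blast
  have "cochromatic_colouring n E (chromatic_number n (all_edges n - E)) f"
    unfolding cochromatic_colouring_def
  proof (intro conjI allI impI)
    show "f ` {..<n} \<subseteq> {..<chromatic_number n (all_edges n - E)}"
      using f unfolding proper_colouring_def by blast
  next
    fix c assume c: "c < chromatic_number n (all_edges n - E)"
    have "is_clique E {v. v < n \<and> f v = c}"
      unfolding is_clique_def
    proof (intro ballI impI)
      fix u v assume uv: "u \<in> {v. v < n \<and> f v = c}" "v \<in> {v. v < n \<and> f v = c}" "u \<noteq> v"
      have "{u, v} \<notin> all_edges n - E" using f c uv unfolding proper_colouring_def is_indep_def by blast
      moreover have "{u, v} \<in> all_edges n" using uv unfolding all_edges_def by auto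
      ultimately show "{u, v} \<in> E" by blast
    qed
    then show "is_indep E {v. v < n \<and> f v = c} \<or> is_clique E {v. v < n \<and> f v = c}" ..
  qed
  then show ?thesis unfolding cochromatic_number_def by (intro Least_le) blast
qed

lemma prob_eq:
  "measure_pmf.prob (Gnp_half n) S = card (Pow (all_edges n) \<inter> S) / card (Pow (all_edges n))"
  unfolding Gnp_half_def by (rule measure_pmf_of_set) (auto simp: fin_edges)

lemma main_n:
  fixes g :: int
  assumes h: "measure_pmf.prob (Gnp_half n)
      {E. int (chromatic_number n E) - int (cochromatic_number n E) \<le> g} > 0.999"
  shows "\<exists>s::int. measure_pmf.prob (Gnp_half n)
        {E. s \<le> int (chromatic_number n E) \<and> int (chromatic_number n E) \<le> s + g} > 0.9"
proof -
  define A where "A = all_edges n"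
  define \<Omega> where "\<Omega> = Pow A"
  define X where "X = chromatic_number n"
  define Y where "Y = (\<lambda>E. chromatic_number n (A - E))"
  define Z where "Z = cochromatic_number n"
  define N where "N = card \<Omega>"
  define cnt where "cnt = (\<lambda>P. card {E\<in>\<Omega>. P E})"
  have finA: "finite A" unfolding A_def by (rule fin_edges)
  have fin\<Omega>: "finite \<Omega>" unfolding \<Omega>_def using finA by simp
  have N2: "N = 2 ^ card A" unfolding N_def \<Omega>_def using finA by (simp add: card_Pow)
  have Npos: "real N > 0" using N2 by simp
  have prob: "measure_pmf.prob (Gnp_half n) {E. P E} = real (cnt P) / real N" for P
  proof -
    have "\<Omega> \<inter> {E. P E} = {E\<in>\<Omega>. P E}" by auto
    then show ?thesis using prob_eq[of n "{E. P E}"] unfolding cnt_def N_def \<Omega>_def A_def by simp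
  qed
  have compl: "cnt P + cnt (\<lambda>E. \<not> P E) = N" for P
  proof -
    have "card {E\<in>\<Omega>. P E} + card {E\<in>\<Omega>. \<not> P E} = card ({E\<in>\<Omega>. P E} \<union> {E\<in>\<Omega>. \<not> P E})"
      by (rule card_Un_disjoint[symmetric]) (use fin\<Omega> in auto)
    also have "{E\<in>\<Omega>. P E} \<union> {E\<in>\<Omega>. \<not> P E} = \<Omega>" by auto
    finally show ?thesis unfolding cnt_def N_def .
  qed
  have cnt_le: "cnt P \<le> cnt Q" if "\<And>E. E \<in> \<Omega> \<Longrightarrow> P E \<Longrightarrow> Q E" for P Q
    unfolding cnt_def by (rule card_mono) (use fin\<Omega> that in auto)
  define p where "p = (\<lambda>k::nat. cnt (\<lambda>E. X E \<le> k))"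
  have "p n = N"
  proof -
    have "{E\<in>\<Omega>. X E \<le> n} = \<Omega>" using chi_le unfolding X_def \<Omega>_def A_def by auto
    then show ?thesis unfolding p_def cnt_def N_def by simp
  qed
  then have ex: "real (p n) > 0.05 * real N" using Npos by simp
  define s where "s = (LEAST k. real (p k) > 0.05 * real N)"
  have s1: "real (p s) > 0.05 * real N" unfolding s_def by (rule LeastI[of "\<lambda>k. real (p k) > 0.05 * real N" n, OF ex])
  have s2: "real (cnt (\<lambda>E. X E < s)) \<le> 0.05 * real N"
  proof (cases s)
    case 0
    then show ?thesis unfolding cnt_def using Npos by simp
  next
    case (Suc m)
    have "\<not> real (p m) > 0.05 * real N" using not_less_Least[of m "\<lambda>k. real (p k) > 0.05 * real N"]
      unfolding s_def[symmetric] Suc by simp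
    moreover have "cnt (\<lambda>E. X E < s) = p m" unfolding p_def Suc by (simp add: less_Suc_eq_le)
    ultimately show ?thesis by simp
  qed
  define U where "U = {E\<in>\<Omega>. int (X E) > int s + g}"
  define V where "V = {E\<in>\<Omega>. Y E \<le> s}"
  have upU: "upset A U" unfolding upset_def U_def \<Omega>_def
  proof (intro conjI allI impI)
    fix x y assume "x \<in> {E \<in> Pow A. int s + g < int (X E)}" "x \<subseteq> y" "y \<subseteq> A"
    moreover have "X x \<le> X y" using chi_mono[of x y n] calculation unfolding X_def A_def by simp
    ultimately show "y \<in> {E \<in> Pow A. int s + g < int (X E)}" by auto
  qed auto
  have upV: "upset A V" unfolding upset_def V_def \<Omega>_def
  proof (intro conjI allI impI)
    fix x y assume "x \<in> {E \<in> Pow A. Y E \<le> s}" "x \<subseteq> y" "y \<subseteq> A"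
    moreover have "Y y \<le> Y x" using chi_mono[of "A - y" "A - x" n] calculation unfolding Y_def A_def by auto
    ultimately show "y \<in> {E \<in> Pow A. Y E \<le> s}" by auto
  qed auto
  have H: "card U * card V \<le> card (U \<inter> V) * N" using harris[OF finA upU upV] N2 by simp
  have cV: "card V = p s"
  proof -
    have "V = (\<lambda>E. A - E) ` {E\<in>\<Omega>. X E \<le> s}"
    proof (intro equalityI subsetI)
      fix E assume "E \<in> V"
      then have "A - E \<in> {E\<in>\<Omega>. X E \<le> s}" "E = A - (A - E)"
        unfolding V_def \<Omega>_def X_def Y_def by auto
      then show "E \<in> (\<lambda>E. A - E) ` {E\<in>\<Omega>. X E \<le> s}" by blast
    next
      fix E assume "E \<in> (\<lambda>E. A - E) ` {E\<in>\<Omega>. X E \<le> s}"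
      then obtain F where "F \<in> \<Omega>" "X F \<le> s" "E = A - F" by blast
      moreover then have "A - E = F" unfolding \<Omega>_def by auto
      ultimately show "E \<in> V" unfolding V_def \<Omega>_def Y_def X_def by auto
    qed
    moreover have "inj_on (\<lambda>E. A - E) {E\<in>\<Omega>. X E \<le> s}"
      unfolding inj_on_def \<Omega>_def by blast
    ultimately show ?thesis unfolding p_def cnt_def by (simp add: card_image)
  qed
  have UV: "card (U \<inter> V) \<le> cnt (\<lambda>E. \<not> (int (X E) - int (Z E) \<le> g))"
  proof -
    have "U \<inter> V \<subseteq> {E\<in>\<Omega>. \<not> (int (X E) - int (Z E) \<le> g)}"
    proof
      fix E assume E: "E \<in> U \<inter> V"
      then have "Z E \<le> Y E" using zeta_le[of E n] unfolding U_def \<Omega>_def Z_def Y_def A_def by auto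
      then show "E \<in> {E\<in>\<Omega>. \<not> (int (X E) - int (Z E) \<le> g)}" using E unfolding U_def V_def by auto
    qed
    then show ?thesis unfolding cnt_def by (rule card_mono[rotated]) (use fin\<Omega> in auto)
  qed
  have hh: "real (cnt (\<lambda>E. int (X E) - int (Z E) \<le> g)) > 0.999 * real N"
  proof -
    let ?q = "measure_pmf.prob (Gnp_half n) {E. int (X E) - int (Z E) \<le> g}"
    have q: "?q > 0.999" using h unfolding X_def Z_def .
    have "real (cnt (\<lambda>E. int (X E) - int (Z E) \<le> g)) = ?q * real N"
      using prob[of "\<lambda>E. int (X E) - int (Z E) \<le> g"] Npos by simp
    moreover have "?q * real N > 0.999 * real N" using q Npos by (intro mult_strict_right_mono) auto
    ultimately show ?thesis by simp
  qed
  have bad: "real (card (U \<inter> V)) < 0.001 * real N"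
  proof -
    have a: "real (cnt (\<lambda>E. int (X E) - int (Z E) \<le> g)) + real (cnt (\<lambda>E. \<not> (int (X E) - int (Z E) \<le> g))) = real N"
      using arg_cong[OF compl[of "\<lambda>E. int (X E) - int (Z E) \<le> g"], of real] by simp
    have b: "real (card (U \<inter> V)) \<le> real (cnt (\<lambda>E. \<not> (int (X E) - int (Z E) \<le> g)))"
      using UV by (rule of_nat_mono)
    show ?thesis using a b hh by (linarith | (simp; linarith) | (simp add: field_simps; linarith) | (simp add: field_simps))
  qed
  have Hr: "real (card U) * real (p s) \<le> real (card (U \<inter> V)) * real N"
    using of_nat_mono[OF H, where ?'a=real] cV by simp
  have cU: "real (card U) < 0.02 * real N"
  proof (rule ccontr)
    assume "\<not> ?thesis"
    then have a: "real (card U) \<ge> 0.02 * real N" by simp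
    have "0.02 * real N * (0.05 * real N) \<le> real (card U) * (0.05 * real N)"
      by (rule mult_right_mono[OF a]) (use Npos in simp)
    also have "\<dots> \<le> real (card U) * real (p s)"
      by (rule mult_left_mono) (use s1 in auto)
    also have "\<dots> \<le> real (card (U \<inter> V)) * real N" by (rule Hr)
    also have "\<dots> < 0.001 * real N * real N"
      by (rule mult_strict_right_mono) (use bad Npos in auto)
    finally show False using Npos by (simp add: power2_eq_square)
  qed
  have cov: "N \<le> cnt (\<lambda>E. int s \<le> int (X E) \<and> int (X E) \<le> int s + g) + cnt (\<lambda>E. X E < s) + card U"
  proof -
    have "\<Omega> \<subseteq> {E\<in>\<Omega>. int s \<le> int (X E) \<and> int (X E) \<le> int s + g} \<union> {E\<in>\<Omega>. X E < s} \<union> U"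
      unfolding U_def by auto
    then have "N \<le> card ({E\<in>\<Omega>. int s \<le> int (X E) \<and> int (X E) \<le> int s + g} \<union> {E\<in>\<Omega>. X E < s} \<union> U)"
      unfolding N_def by (rule card_mono[rotated]) (use fin\<Omega> U_def in auto)
    also have "\<dots> \<le> card ({E\<in>\<Omega>. int s \<le> int (X E) \<and> int (X E) \<le> int s + g} \<union> {E\<in>\<Omega>. X E < s}) + card U"
      by (rule card_Un_le)
    also have "\<dots> \<le> cnt (\<lambda>E. int s \<le> int (X E) \<and> int (X E) \<le> int s + g) + cnt (\<lambda>E. X E < s) + card U"
      unfolding cnt_def using card_Un_le by simp
    finally show ?thesis .
  qed
  have "real (cnt (\<lambda>E. int s \<le> int (X E) \<and> int (X E) \<le> int s + g)) > 0.9 * real N"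
  proof -
    have "real N \<le> real (cnt (\<lambda>E. int s \<le> int (X E) \<and> int (X E) \<le> int s + g)) + real (cnt (\<lambda>E. X E < s)) + real (card U)"
      using of_nat_mono[OF cov] by simp
    then show ?thesis using s2 cU by (linarith | (simp; linarith) | (simp add: field_simps; linarith) | (simp add: field_simps))
  qed
  then have c: "real (cnt (\<lambda>E. int s \<le> int (X E) \<and> int (X E) \<le> int s + g)) / real N > 0.9"
    using Npos by (simp add: field_simps)
  have "measure_pmf.prob (Gnp_half n) {E. int s \<le> int (X E) \<and> int (X E) \<le> int s + g}
     = real (cnt (\<lambda>E. int s \<le> int (X E) \<and> int (X E) \<le> int s + g)) / real N"
    by (rule prob)
  with c have "measure_pmf.prob (Gnp_half n) {E. int s \<le> int (X E) \<and> int (X E) \<le> int s + g} > 0.9"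
    by simp
  then show ?thesis unfolding X_def by blast
qed

theorem proposition3:
  fixes g :: "nat \<Rightarrow> int"
  assumes "\<forall>n. measure_pmf.prob (Gnp_half n)
      {E. int (chromatic_number n E) - int (cochromatic_number n E) \<le> g n} > 0.999"
  shows "\<exists>s t :: nat \<Rightarrow> int. \<forall>n. t n - s n = g n \<and>
      measure_pmf.prob (Gnp_half n)
        {E. s n \<le> int (chromatic_number n E) \<and> int (chromatic_number n E) \<le> t n} > 0.9"
proof -
  have "\<forall>n. \<exists>s::int. measure_pmf.prob (Gnp_half n)
        {E. s \<le> int (chromatic_number n E) \<and> int (chromatic_number n E) \<le> s + g n} > 0.9"
    using main_n assms by blast
  then obtain s where s: "\<forall>n. measure_pmf.prob (Gnp_half n)
        {E. s n \<le> int (chromatic_number n E) \<and> int (chromatic_number n E) \<le> s n + g n} > 0.9"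
    by metis
  show ?thesis
    by (rule exI[of _ s], rule exI[of _ "\<lambda>n. s n + g n"]) (use s in simp)
qed

end
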